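(* Let $\sigma_0$ be a strictly positive random variable with $L(x):=1/\mathbb{P}(\sigma_0>x)$ slowly varying at infinity (i.e. $\lim_{u\to\infty}L(uv)/L(u)=1$ for every $v>0$), and let $Y=\{Y_n\}_{n\in\mathbb{N}}$ be i.i.d. with the law of $\sigma_0$. Let $h_t$ be any function with $h_t\to\infty$, $h_t^2=o(r_t)$, and such that, for all sufficiently large $t$, \[ L(\ell_t/h_t^3)>L(\ell_t)(1-1/h_t)\quad\text{and}\quad L(\ell_th_t^3)<L(\ell_t)(1+1/h_t).\] Then, as $t\to\infty$, \[ \mathbb{P}\Big(s_{\ell_t}<\frac{t}{2r_th_t^2}\Big)\to1.\]
   Context: $\ell_t:=\min\{s\ge0: sL(s)\ge t\}$ and $r_t:=L(\ell_t)$. For $n\ge0$, $M_n:=\max\{Y_i: i\le\lfloor n\rfloor\}$. For a level $l>0$, $n_l:=\min\{n\in\mathbb{N}: M_n>l\}$ is the index of the first exceedance of $l$, and $s_l:=\sum_{i<n_l}Y_i$. *)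

theory Defs
  imports "HOL-Probability.Probability" "HOL-Library.Landau_Symbols"
begin

definition tailL :: "'a measure \<Rightarrow> ('a \<Rightarrow> real) \<Rightarrow> real \<Rightarrow> real" where
  "tailL M X x = 1 / measure M {\<omega> \<in> space M. X \<omega> > x}"

definition slowly_varying :: "(real \<Rightarrow> real) \<Rightarrow> bool" where
  "slowly_varying L \<longleftrightarrow> (\<forall>v>0. ((\<lambda>u. L (u * v) / L u) \<longlongrightarrow> 1) at_top)"

text \<open>ell_t := min { s >= 0 : s L(s) >= t } (the minimum is attained, rendered as Inf)\<close>
definition ell :: "(real \<Rightarrow> real) \<Rightarrow> real \<Rightarrow> real" where
  "ell L t = Inf {s. 0 \<le> s \<and> t \<le> s * L s}"

definition rr :: "(real \<Rightarrow> real) \<Rightarrow> real \<Rightarrow> real" where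
  "rr L t = L (ell L t)"

definition maxY :: "(nat \<Rightarrow> 'a \<Rightarrow> real) \<Rightarrow> nat \<Rightarrow> 'a \<Rightarrow> real" where
  "maxY Y n \<omega> = Max {Y i \<omega> | i. i \<le> n}"

definition first_exc :: "(nat \<Rightarrow> 'a \<Rightarrow> real) \<Rightarrow> real \<Rightarrow> 'a \<Rightarrow> nat" where
  "first_exc Y l \<omega> = (LEAST n. maxY Y n \<omega> > l)"

definition sl :: "(nat \<Rightarrow> 'a \<Rightarrow> real) \<Rightarrow> real \<Rightarrow> 'a \<Rightarrow> real" where
  "sl Y l \<omega> = (\<Sum>i < first_exc Y l \<omega>. Y i \<omega>)"

end

theory Submission
  imports Defs
begin




lemma phi_tendsto:
  fixes f :: "real \<Rightarrow> real" and cc q :: real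
  assumes mono: "\<And>x y. x \<le> y \<Longrightarrow> f x \<le> f y"
    and ge1: "\<And>x. f x \<ge> 1"
    and cc: "cc > 0"
    and q: "q > 0" "q^3 < 2"
    and dbl: "\<And>x. x \<ge> cc \<Longrightarrow> f (2*x) \<le> q * f x"
  shows "((\<lambda>x. f x ^ 3 / x) \<longlongrightarrow> 0) at_top"
proof -
  define \<phi> where "\<phi> x = f x ^ 3 / x" for x
  define \<rho> where "\<rho> = q^3 / 2"
  have \<rho>: "0 < \<rho>" "\<rho> < 1" using q by (auto simp: \<rho>_def)
  have step: "\<phi> (2*x) \<le> \<rho> * \<phi> x" if "x \<ge> cc" for x
  proof -
    have "0 \<le> f (2*x)" using ge1[of "2*x"] by simp
    then have "f (2*x) ^ 3 \<le> (q * f x)^3" using dbl[OF that] by (intro power_mono) auto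
    then have "f (2*x) ^ 3 / (2*x) \<le> (q * f x)^3 / (2*x)"
      using that cc by (intro divide_right_mono) auto
    also have "\<dots> = \<rho> * \<phi> x" using that cc by (simp add: \<rho>_def \<phi>_def power_mult_distrib)
    finally show ?thesis by (simp add: \<phi>_def)
  qed
  have \<phi>nn: "\<phi> x \<ge> 0" if "x > 0" for x using that ge1[of x] by (simp add: \<phi>_def)
  define B where "B = f (2*cc) ^ 3 / cc"
  have c1: "\<forall>x. cc \<le> x \<and> x \<le> 2^(n+1) * cc \<longrightarrow> \<phi> x \<le> B" for n
  proof (induction n)
    case 0
    show ?case
    proof (intro allI impI)
      fix x assume x: "cc \<le> x \<and> x \<le> 2^(0+1) * cc"
      have "0 \<le> f x" using ge1[of x] by simp
      then have "f x ^ 3 \<le> f (2*cc) ^ 3" using mono[of x "2*cc"] x by (intro power_mono) auto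
      moreover have "f (2*cc) ^ 3 / x \<le> f (2*cc) ^ 3 / cc"
        using x cc ge1[of "2*cc"] by (intro divide_left_mono) auto
      ultimately show "\<phi> x \<le> B" unfolding \<phi>_def B_def using x cc
        by (meson divide_right_mono dual_order.trans less_le_trans order_less_imp_le)
    qed
  next
    case (Suc n)
    show ?case
    proof (intro allI impI)
      fix x assume x: "cc \<le> x \<and> x \<le> 2^(Suc n+1) * cc"
      show "\<phi> x \<le> B"
      proof (cases "x \<le> 2^(n+1) * cc")
        case True then show ?thesis using Suc x by auto
      next
        case False
        have "2^(n+1) * cc \<ge> 2 * cc" using cc
          by (intro mult_right_mono) (auto simp: self_le_power)
        then have h: "cc \<le> x/2 \<and> x/2 \<le> 2^(n+1) * cc" using False x by auto
        then have "\<phi> (x/2) \<le> B" using Suc by blast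
        moreover have "\<phi> x \<le> \<rho> * \<phi> (x/2)" using step[of "x/2"] h by simp
        moreover have "\<phi> (x/2) \<ge> 0" using h cc \<phi>nn[of "x/2"] by auto
        ultimately have "\<phi> x \<le> \<rho> * B" by (meson \<rho>(1) dual_order.trans less_imp_le mult_left_mono)
        also have "\<dots> \<le> B" using \<rho> \<open>\<phi> (x/2) \<le> B\<close> \<open>\<phi> (x/2) \<ge> 0\<close>
          using mult_right_mono[of \<rho> 1 B] by linarith
        finally show ?thesis .
      qed
    qed
  qed
  have c1': "\<phi> x \<le> B" if "x \<ge> cc" for x
  proof -
    obtain n where "x / cc < 2^n" using real_arch_pow[of 2 "x/cc"] by auto
    then have "x < 2^n * cc" using cc by (simp add: field_simps)
    moreover have "2^n * cc \<le> 2^(n+1) * cc" using cc by simp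
    ultimately have "x \<le> 2^(n+1) * cc" by linarith
    then show ?thesis using c1 that by blast
  qed
  have c2: "\<forall>x. x \<ge> 2^n * cc \<longrightarrow> \<phi> x \<le> B * \<rho>^n" for n
  proof (induction n)
    case 0 then show ?case using c1' by simp
  next
    case (Suc n)
    show ?case
    proof (intro allI impI)
      fix x assume x: "x \<ge> 2^Suc n * cc"
      then have h: "x/2 \<ge> 2^n * cc" by simp
      have "1 * cc \<le> 2^n * cc" using cc by (intro mult_right_mono) auto
      then have "x/2 \<ge> cc" using h by simp
      then have "\<phi> x \<le> \<rho> * \<phi> (x/2)" using step[of "x/2"] by simp
      also have "\<dots> \<le> \<rho> * (B * \<rho>^n)" using Suc h \<rho> by (intro mult_left_mono) auto
      finally show "\<phi> x \<le> B * \<rho>^Suc n" by (simp add: algebra_simps)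
    qed
  qed
  have B0: "B \<ge> 0" using cc ge1[of "2*cc"] by (simp add: B_def)
  have "((\<lambda>x. \<phi> x) \<longlongrightarrow> 0) at_top"
  proof (rule tendstoI)
    fix e :: real assume e: "e > 0"
    obtain n where n: "\<rho>^n < e / (B + 1)" using real_arch_pow_inv[of "e/(B+1)" \<rho>] e B0 \<rho> by auto
    have "B * \<rho>^n \<le> (B+1) * \<rho>^n" using \<rho> by (intro mult_right_mono) auto
    also have "\<dots> < e" using n B0 by (simp add: field_simps)
    finally have Bn: "B * \<rho>^n < e" .
    have "eventually (\<lambda>x. x \<ge> 2^n * cc) at_top" by (rule eventually_ge_at_top)
    moreover have "eventually (\<lambda>x. x > (0::real)) at_top" using eventually_gt_at_top[of "0::real"] by simp
    ultimately show "eventually (\<lambda>x. dist (\<phi> x) 0 < e) at_top"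
    proof eventually_elim
      case (elim x)
      then show ?case using c2 \<phi>nn[of x] Bn by fastforce
    qed
  qed
  then show ?thesis by (simp add: \<phi>_def)
qed


lemma ell_basic:
  fixes L :: "real \<Rightarrow> real" and t :: real
  assumes mono: "\<And>x y. x \<le> y \<Longrightarrow> L x \<le> L y" and ge1: "\<And>x. L x \<ge> 1" and t: "t \<ge> 0"
  shows "ell L t \<ge> 0" "\<And>s. 0 \<le> s \<Longrightarrow> s < ell L t \<Longrightarrow> s * L s < t"
    "\<And>s. s > ell L t \<Longrightarrow> t \<le> s * L s"
proof -
  define S where "S = {s. 0 \<le> s \<and> t \<le> s * L s}"
  have tS: "t \<in> S" using t ge1[of t] mult_left_mono[of 1 "L t" t] by (auto simp: S_def)
  have bdd: "bdd_below S" by (auto simp: S_def bdd_below_def)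
  show "ell L t \<ge> 0" unfolding ell_def S_def[symmetric] using tS
    by (intro cInf_greatest) (auto simp: S_def)
  show "s * L s < t" if "0 \<le> s" "s < ell L t" for s
  proof (rule ccontr)
    assume "\<not> s * L s < t"
    then have "s \<in> S" using that by (auto simp: S_def)
    then have "ell L t \<le> s" unfolding ell_def S_def[symmetric] using bdd by (rule cInf_lower)
    then show False using that by simp
  qed
  show "t \<le> s * L s" if "s > ell L t" for s
  proof -
    have "Inf S < s" using that by (simp add: ell_def S_def)
    then obtain s' where s': "s' \<in> S" "s' < s" using cInf_less_iff[of S s] tS bdd by auto
    then have "t \<le> s' * L s'" "0 \<le> s'" by (auto simp: S_def)
    moreover have "s' * L s' \<le> s * L s" using s' \<open>0 \<le> s'\<close> mono[of s' s] ge1[of s']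
      by (intro mult_mono) auto
    ultimately show ?thesis by linarith
  qed
qed

lemma ell_at_top:
  fixes L :: "real \<Rightarrow> real"
  assumes mono: "\<And>x y. x \<le> y \<Longrightarrow> L x \<le> L y" and ge1: "\<And>x. L x \<ge> 1"
  shows "filterlim (ell L) at_top at_top"
unfolding filterlim_at_top_gt[where c=0] proof (intro allI impI)
  fix B :: real assume B: "B > 0"
  show "eventually (\<lambda>t. B \<le> ell L t) at_top"
    using eventually_gt_at_top[of "(B+1) * L (B+1)"]
  proof eventually_elim
    case (elim t)
    have "0 \<le> (B+1) * L (B+1)" using B ge1[of "B+1"] by simp
    then have t: "t \<ge> 0" using elim by linarith
    show ?case
    proof (rule ccontr)
      assume "\<not> B \<le> ell L t"
      then have "B + 1 > ell L t" by simp
      have "t \<le> (B+1) * L (B+1)" by (rule ell_basic(3)[where L=L]) (use mono ge1 t \<open>B + 1 > ell L t\<close> in auto)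
      then show False using elim by simp
    qed
  qed
qed

lemma arith1:
  fixes q pa h :: real and N :: nat
  assumes pa: "0 < pa" "pa \<le> 1" and q: "q \<ge> 1 - 1/h" "q \<le> 1" and N: "sqrt h \<le> N * pa"
  shows "q * (1 - (1 - pa)^N) \<ge> 1 - 1/h - exp (- sqrt h)"
proof -
  have "(1 - pa)^N \<le> exp (-pa)^N"
    using pa by (intro power_mono) (auto simp: exp_ge_add_one_self[of "-pa", simplified])
  also have "\<dots> = exp (- (N * pa))" by (simp add: exp_of_nat_mult[symmetric] mult.commute)
  also have "\<dots> \<le> exp (- sqrt h)" using N by simp
  finally have E: "(1 - pa)^N \<le> exp (- sqrt h)" .
  have E0: "0 \<le> (1 - pa)^N" using pa by simp
  have "q * (1 - (1 - pa)^N) = q - q * (1 - pa)^N" by (simp add: algebra_simps)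
  moreover have "q * (1 - pa)^N \<le> (1 - pa)^N"
    using q E0 mult_right_mono[of q 1 "(1 - pa)^N"] by simp
  ultimately show ?thesis using q E by linarith
qed

lemma arith2:
  fixes r h l x0 La Fa :: real and N :: nat
  assumes h2: "h \<ge> 2" and hr: "h^2 \<le> r" and r1: "r \<ge> 1" and l: "l > 0" and x0: "x0 > 0"
    and La: "La \<ge> r / 2"
    and N: "N \<le> r * sqrt h + 1"
    and Fa: "Fa \<le> 2*x0 + 5*(l/h^3)*(1/La)"
  shows "N * Fa / (l/(8*h^2)) \<le> 32*x0*r^3/l + 80*(sqrt h+1)/h"
proof -
  have h0: "h > 0" using h2 by simp
  have sh1: "sqrt h \<ge> 1" using h2 by simp
  have "sqrt h \<le> sqrt h * sqrt h" using sh1 mult_left_mono[of 1 "sqrt h" "sqrt h"] by simp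
  also have "\<dots> = h" using h0 by simp
  finally have sh: "sqrt h \<le> h" .
  have La0: "La > 0" using La r1 by simp
  have "h \<le> h * h" using h2 mult_left_mono[of 1 h h] by simp
  then have hle: "h \<le> r" using hr by (simp add: power2_eq_square)
  have "1 \<le> r * sqrt h" using mult_mono[of 1 r 1 "sqrt h"] r1 sh1 by simp
  then have N1: "N \<le> 2 * r * sqrt h" using N by simp
  have Nn: "0 \<le> real N" by simp
  have "N * Fa / (l/(8*h^2)) = N * Fa * 8 * h^2 / l" using l h0 by (simp add: field_simps)
  also have "\<dots> \<le> N * (2*x0 + 5*(l/h^3)*(1/La)) * 8 * h^2 / l"
    using Fa l h0 by (intro divide_right_mono mult_right_mono mult_left_mono) auto
  also have "\<dots> = N * 16 * x0 * h^2 / l + N * 40 / (h * La)"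
    using l h0 La0 by (simp add: field_simps power2_eq_square power3_eq_cube)
  also have "N * 16 * x0 * h^2 / l \<le> (2 * r * sqrt h) * 16 * x0 * h^2 / l"
    using N1 x0 l by (intro divide_right_mono mult_right_mono) auto
  also have "(2 * r * sqrt h) * 16 * x0 * h^2 / l \<le> 32*x0*r^3/l"
  proof -
    have "sqrt h * h^2 \<le> h * h^2" using sh by (intro mult_right_mono) auto
    also have "h * h^2 \<le> r * r" using hle hr h0 by (intro mult_mono) auto
    finally have "r * (sqrt h * h^2) \<le> r * (r * r)" using r1 by (intro mult_left_mono) auto
    then have "(r * (sqrt h * h^2)) * (32 * x0) \<le> (r * (r * r)) * (32 * x0)"
      using x0 by (intro mult_right_mono) auto
    then have "(2 * r * sqrt h) * 16 * x0 * h^2 \<le> 32*x0*r^3"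
      by (simp add: power3_eq_cube algebra_simps)
    then show ?thesis using l by (intro divide_right_mono) auto
  qed
  also have "N * 40 / (h * La) \<le> (r * sqrt h + 1) * 40 / (h * (r/2))"
    using N La h0 r1 by (intro frac_le mult_right_mono mult_left_mono) auto
  also have "\<dots> = 80 * (sqrt h + 1/r) / h" using h0 r1 by (simp add: field_simps)
  also have "\<dots> \<le> 80 * (sqrt h + 1) / h" using h0 r1 by (intro divide_right_mono mult_left_mono add_left_mono) auto
  finally show ?thesis by simp
qed

locale setting = prob_space M for M :: "'a measure" +
  fixes \<sigma>0 :: "'a \<Rightarrow> real" and Y :: "nat \<Rightarrow> 'a \<Rightarrow> real"
  assumes \<sigma>m[measurable]: "\<sigma>0 \<in> borel_measurable M"
    and Ym[measurable]: "\<And>i. Y i \<in> borel_measurable M"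
    and ind: "indep_vars (\<lambda>_. borel) Y UNIV"
    and dist: "\<And>i. distr M borel (Y i) = distr M borel \<sigma>0"
    and sv: "slowly_varying (tailL M \<sigma>0)"
begin

definition p :: "real \<Rightarrow> real" where
  "p x = prob {\<omega>\<in>space M. \<sigma>0 \<omega> > x}"

lemma p_Y: "prob {\<omega>\<in>space M. Y i \<omega> > x} = p x"
proof -
  have "prob {\<omega>\<in>space M. Y i \<omega> > x} = measure (distr M borel (Y i)) {x<..}"
    by (subst measure_distr) (auto intro!: arg_cong[where f=prob])
  also have "\<dots> = measure (distr M borel \<sigma>0) {x<..}" by (simp add: dist)
  also have "\<dots> = p x" unfolding p_def
    by (subst measure_distr) (auto intro!: arg_cong[where f=prob])
  finally show ?thesis .
qed

lemma p_Y_le: "prob {\<omega>\<in>space M. Y i \<omega> \<le> x} = 1 - p x"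
proof -
  have "{\<omega>\<in>space M. Y i \<omega> \<le> x} = space M - {\<omega>\<in>space M. Y i \<omega> > x}" by auto
  then show ?thesis using prob_compl[of "{\<omega>\<in>space M. Y i \<omega> > x}"] p_Y[where i=i and x=x] by simp
qed

lemma indep_prod:
  assumes "finite J" "J \<noteq> {}" "\<And>j. j \<in> J \<Longrightarrow> B j \<in> sets borel"
  shows "prob (\<Inter>j\<in>J. Y j -` B j \<inter> space M) = (\<Prod>j\<in>J. prob (Y j -` B j \<inter> space M))"
proof -
  have "indep_sets (\<lambda>i. { Y i -` A \<inter> space M | A. A \<in> sets borel}) UNIV"
    using ind unfolding indep_vars_def2 by auto
  then show ?thesis using assms by (intro indep_setsD) auto
qed

lemma prob_An:
  "prob {\<omega>\<in>space M. (\<forall>i<n. Y i \<omega> \<le> a) \<and> Y n \<omega> > l} = (1 - p a)^n * p l"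
proof -
  define B where "B j = (if j < n then {..a} else {l<..})" for j
  have eq: "{\<omega>\<in>space M. (\<forall>i<n. Y i \<omega> \<le> a) \<and> Y n \<omega> > l} = (\<Inter>j\<in>{..n}. Y j -` B j \<inter> space M)"
  proof (intro set_eqI iffI)
    fix \<omega> assume "\<omega> \<in> (\<Inter>j\<in>{..n}. Y j -` B j \<inter> space M)"
    then have h: "\<And>j. j \<le> n \<Longrightarrow> Y j \<omega> \<in> B j" "\<omega> \<in> space M" by auto
    have "\<forall>i<n. Y i \<omega> \<le> a"
    proof (intro allI impI)
      fix i assume "i < n" then show "Y i \<omega> \<le> a" using h(1)[of i] by (simp add: B_def)
    qed
    moreover have "Y n \<omega> > l" using h(1)[of n] by (auto simp: B_def)
    ultimately show "\<omega> \<in> {\<omega>\<in>space M. (\<forall>i<n. Y i \<omega> \<le> a) \<and> Y n \<omega> > l}" using h by auto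
  qed (auto simp: B_def)
  have "prob (\<Inter>j\<in>{..n}. Y j -` B j \<inter> space M) = (\<Prod>j\<in>{..n}. prob (Y j -` B j \<inter> space M))"
    by (rule indep_prod) (auto simp: B_def)
  also have "\<dots> = (\<Prod>j\<in>{..<n}. prob (Y j -` B j \<inter> space M)) * prob (Y n -` B n \<inter> space M)"
    by (simp add: lessThan_Suc_atMost[symmetric])
  also have "(\<Prod>j\<in>{..<n}. prob (Y j -` B j \<inter> space M)) = (\<Prod>j\<in>{..<n}. 1 - p a)"
  proof (rule prod.cong)
    fix j assume "j \<in> {..<n}"
    then have "Y j -` B j \<inter> space M = {\<omega>\<in>space M. Y j \<omega> \<le> a}" by (auto simp: B_def)
    then show "prob (Y j -` B j \<inter> space M) = 1 - p a" using p_Y_le by simp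
  qed simp
  also have "prob (Y n -` B n \<inter> space M) = p l"
  proof -
    have "Y n -` B n \<inter> space M = {\<omega>\<in>space M. Y n \<omega> > l}" by (auto simp: B_def)
    then show ?thesis using p_Y by simp
  qed
  finally show ?thesis using eq by simp
qed


lemma p_mono: "x \<le> y \<Longrightarrow> p y \<le> p x"
  unfolding p_def by (intro finite_measure_mono) auto

lemma p_le1: "p x \<le> 1" unfolding p_def by simp
lemma p_nn: "p x \<ge> 0" unfolding p_def by simp

lemma Lf_eq: "tailL M \<sigma>0 x = 1 / p x" unfolding tailL_def p_def by simp

lemma p_pos: "p x > 0"
proof (rule ccontr)
  assume "\<not> p x > 0"
  then have px: "p x = 0" using p_nn[of x] by simp
  have z: "p y = 0" if "y \<ge> x" for y using p_mono[OF that] p_nn[of y] px by simp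
  have lim: "((\<lambda>u. tailL M \<sigma>0 (u * 2) / tailL M \<sigma>0 u) \<longlongrightarrow> 1) at_top"
    using sv unfolding slowly_varying_def by auto
  have ev: "eventually (\<lambda>u. tailL M \<sigma>0 (u * 2) / tailL M \<sigma>0 u = 0) at_top"
    using eventually_ge_at_top[of "max x 0"]
    by eventually_elim (auto simp: Lf_eq z)
  have "((\<lambda>u::real. 0::real) \<longlongrightarrow> 1) at_top"
    using lim unfolding tendsto_cong[OF ev] .
  then show False using tendsto_const_iff[OF trivial_limit_at_top_linorder, of "0::real" 1] by auto
qed

lemma L_ge1: "tailL M \<sigma>0 x \<ge> 1"
  using p_pos[of x] p_le1[of x] by (simp add: Lf_eq)

lemma L_pos: "tailL M \<sigma>0 x > 0" using L_ge1[of x] by simp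

lemma L_mono: "x \<le> y \<Longrightarrow> tailL M \<sigma>0 x \<le> tailL M \<sigma>0 y"
  using p_mono[of x y] p_pos[of x] p_pos[of y] by (simp add: Lf_eq frac_le)

lemma L_dbl: "\<exists>x0>0. \<forall>x\<ge>x0. tailL M \<sigma>0 (2*x) \<le> 11/10 * tailL M \<sigma>0 x"
proof -
  have "((\<lambda>u. tailL M \<sigma>0 (u * 2) / tailL M \<sigma>0 u) \<longlongrightarrow> 1) at_top"
    using sv unfolding slowly_varying_def by auto
  then have "eventually (\<lambda>u. tailL M \<sigma>0 (u * 2) / tailL M \<sigma>0 u < 11/10) at_top"
    by (rule order_tendstoD) simp
  then obtain x1 where x1: "\<And>x. x \<ge> x1 \<Longrightarrow> tailL M \<sigma>0 (x * 2) / tailL M \<sigma>0 x < 11/10"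
    by (auto simp: eventually_at_top_linorder)
  show ?thesis
  proof (intro exI[of _ "max x1 1"] conjI allI impI)
    fix x assume "max x1 1 \<le> x"
    then have "tailL M \<sigma>0 (x * 2) / tailL M \<sigma>0 x < 11/10" using x1 by simp
    then show "tailL M \<sigma>0 (2*x) \<le> 11/10 * tailL M \<sigma>0 x" using L_pos[of x]
      by (simp add: field_simps mult.commute)
  qed simp
qed

lemma L_phi: "((\<lambda>x. tailL M \<sigma>0 x ^ 3 / x) \<longlongrightarrow> 0) at_top"
proof -
  obtain x0 where x0: "x0 > 0" "\<And>x. x \<ge> x0 \<Longrightarrow> tailL M \<sigma>0 (2*x) \<le> 11/10 * tailL M \<sigma>0 x"
    using L_dbl by auto
  show ?thesis
    by (rule phi_tendsto[where cc=x0 and q="11/10"]) (use x0 L_mono L_ge1 in \<open>auto simp: power3_eq_cube\<close>)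
qed


definition g :: "real \<Rightarrow> real \<Rightarrow> real" where
  "g a x = (if 0 \<le> x \<and> x \<le> a then x else 0)"

lemma g_meas[measurable]: "g a \<in> borel_measurable borel"
  unfolding g_def by measurable

lemma g_nn: "g a x \<ge> 0" by (simp add: g_def)

lemma g_bound: "norm (g a x) \<le> \<bar>a\<bar>" by (simp add: g_def)

lemma int_g: "f \<in> borel_measurable M \<Longrightarrow> integrable M (\<lambda>\<omega>. g a (f \<omega>))"
  by (rule integrable_const_bound[where B="\<bar>a\<bar>"]) (auto intro!: AE_I2 simp: g_def)

definition F :: "real \<Rightarrow> real" where
  "F a = expectation (\<lambda>\<omega>. g a (\<sigma>0 \<omega>))"

lemma F_Y: "expectation (\<lambda>\<omega>. g a (Y i \<omega>)) = F a"
proof -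
  have "expectation (\<lambda>\<omega>. g a (Y i \<omega>)) = integral\<^sup>L (distr M borel (Y i)) (g a)"
    by (subst integral_distr) auto
  also have "\<dots> = integral\<^sup>L (distr M borel \<sigma>0) (g a)" by (simp add: dist)
  also have "\<dots> = F a" unfolding F_def by (subst integral_distr) auto
  finally show ?thesis .
qed

lemma F_le: "a \<ge> 0 \<Longrightarrow> F a \<le> a"
proof -
  assume a: "a \<ge> 0"
  have "F a \<le> expectation (\<lambda>\<omega>. a)" unfolding F_def
    using a by (intro integral_mono int_g) (auto simp: g_def)
  then show ?thesis by (simp add: prob_space)
qed

lemma F_step: assumes a: "a \<ge> 0" shows "F a \<le> F (a/2) + a * p (a/2)"
proof -
  define A where "A = {\<omega>\<in>space M. \<sigma>0 \<omega> > a/2}"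
  have A: "A \<in> sets M" unfolding A_def by measurable
  have iA: "integrable M (indicator A :: 'a \<Rightarrow> real)"
    using A by (intro integrable_real_indicator) (auto simp: less_top[symmetric])
  have "F a \<le> expectation (\<lambda>\<omega>. g (a/2) (\<sigma>0 \<omega>) + a * indicator A \<omega>)" unfolding F_def
  proof (rule integral_mono)
    show "integrable M (\<lambda>\<omega>. g a (\<sigma>0 \<omega>))" by (rule int_g) simp
    show "integrable M (\<lambda>\<omega>. g (a/2) (\<sigma>0 \<omega>) + a * indicator A \<omega>)"
      by (rule Bochner_Integration.integrable_add[OF int_g integrable_mult_right[OF iA]]) simp
    fix \<omega> assume "\<omega> \<in> space M"
    then show "g a (\<sigma>0 \<omega>) \<le> g (a/2) (\<sigma>0 \<omega>) + a * indicator A \<omega>"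
      using a by (auto simp: g_def A_def indicator_def)
  qed
  also have "\<dots> = expectation (\<lambda>\<omega>. g (a/2) (\<sigma>0 \<omega>)) + expectation (\<lambda>\<omega>. a * indicator A \<omega>)"
    by (rule Bochner_Integration.integral_add[OF int_g integrable_mult_right[OF iA]]) simp
  also have "expectation (\<lambda>\<omega>. a * indicator A \<omega>) = a * prob A"
    using A by (simp add: Int_absorb2 sets.sets_into_space)
  also have "prob A = p (a/2)" by (simp add: A_def p_def)
  finally show ?thesis by (simp add: F_def)
qed

lemma F_bound:
  assumes x0: "x0 > 0" and dbl: "\<And>x. x \<ge> x0 \<Longrightarrow> p x \<le> 11/10 * p (2*x)"
  shows "a \<ge> 0 \<Longrightarrow> F a \<le> 2*x0 + 5 * a * p a"
proof -
  have c: "\<forall>a. 0 \<le> a \<and> a \<le> 2^(n+1) * x0 \<longrightarrow> F a \<le> 2*x0 + 5 * a * p a" for n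
  proof (induction n)
    case 0
    show ?case
    proof (intro allI impI)
      fix a assume a: "0 \<le> a \<and> a \<le> 2^(0+1) * x0"
      have "F a \<le> a" using F_le a by simp
      moreover have "0 \<le> 5 * a * p a" using a p_nn[of a] by simp
      ultimately show "F a \<le> 2*x0 + 5 * a * p a" using a by simp
    qed
  next
    case (Suc n)
    show ?case
    proof (intro allI impI)
      fix a assume a: "0 \<le> a \<and> a \<le> 2^(Suc n+1) * x0"
      show "F a \<le> 2*x0 + 5 * a * p a"
      proof (cases "a \<le> 2 * x0")
        case True
        have "F a \<le> a" using F_le a by simp
        moreover have "0 \<le> 5 * a * p a" using a p_nn[of a] by simp
        ultimately show ?thesis using True by simp
      next
        case False
        then have h: "0 \<le> a/2 \<and> a/2 \<le> 2^(n+1) * x0" "a/2 \<ge> x0" using a by auto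
        have "F a \<le> F (a/2) + a * p (a/2)" using F_step a by simp
        also have "\<dots> \<le> 2*x0 + 5 * (a/2) * p (a/2) + a * p (a/2)"
        proof -
          have "F (a/2) \<le> 2*x0 + 5 * (a/2) * p (a/2)" using Suc.IH h(1) by blast
          then show ?thesis by linarith
        qed
        also have "\<dots> = 2*x0 + 7/2 * a * p (a/2)" by simp
        also have "\<dots> \<le> 2*x0 + 7/2 * a * (11/10 * p a)"
          using dbl[OF h(2)] a by (intro add_left_mono mult_left_mono) auto
        also have "\<dots> \<le> 2*x0 + 5 * a * p a" using a p_nn[of a]
          by (simp add: mult_right_mono)
        finally show ?thesis .
      qed
    qed
  qed
  assume a: "a \<ge> 0"
  obtain n where "a / x0 < 2^n" using real_arch_pow[of 2 "a/x0"] by auto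
  then have "a < 2^n * x0" using x0 by (simp add: field_simps)
  moreover have "2^n * x0 \<le> 2^(n+1) * x0" using x0 by simp
  ultimately have "a \<le> 2^(n+1) * x0" by linarith
  then show ?thesis using c a by blast
qed


lemma maxY_eq: "maxY Y n \<omega> = Max ((\<lambda>i. Y i \<omega>) ` {..n})"
  unfolding maxY_def by (rule arg_cong[where f=Max]) auto

lemma maxY_meas[measurable]: "maxY Y n \<in> borel_measurable M"
  unfolding maxY_eq[abs_def] by measurable

lemma first_exc_meas[measurable]: "first_exc Y l \<in> measurable M (count_space UNIV)"
  unfolding first_exc_def[abs_def] by measurable

lemma sl_meas[measurable]: "sl Y l \<in> borel_measurable M"
proof -
  have "(\<lambda>\<omega>. (\<lambda>n \<omega>. \<Sum>i<n. Y i \<omega>) (first_exc Y l \<omega>) \<omega>) \<in> borel_measurable M"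
    by (rule measurable_compose_countable[OF _ first_exc_meas]) measurable
  then show ?thesis unfolding sl_def[abs_def] by simp
qed

lemma first_exc_eq:
  assumes "\<forall>i<n. Y i \<omega> \<le> a" "Y n \<omega> > l" "a \<le> l"
  shows "first_exc Y l \<omega> = n"
  unfolding first_exc_def
proof (rule Least_equality)
  show "l < maxY Y n \<omega>" unfolding maxY_eq using assms(2)
    by (meson Max_ge atMost_iff finite_atMost finite_imageI image_eqI less_le_trans order_refl)
  fix m assume "l < maxY Y m \<omega>"
  show "n \<le> m"
  proof (rule ccontr)
    assume "\<not> n \<le> m"
    have "\<forall>i\<le>m. Y i \<omega> \<le> l"
    proof (intro allI impI)
      fix i assume "i \<le> m"
      then have "i < n" using \<open>\<not> n \<le> m\<close> by simp
      then show "Y i \<omega> \<le> l" using assms(1,3) by force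
    qed
    then have "maxY Y m \<omega> \<le> l" unfolding maxY_eq by (subst Max_le_iff) auto
    then show False using \<open>l < maxY Y m \<omega>\<close> by simp
  qed
qed

lemma main_bound:
  assumes a: "0 < a" "a \<le> l" and c: "c > 0"
  shows "prob {\<omega>\<in>space M. sl Y l \<omega> < c} \<ge> (p l / p a) * (1 - (1 - p a)^N) - N * F a / c"
proof -
  define A where "A n = {\<omega>\<in>space M. (\<forall>i<n. Y i \<omega> \<le> a) \<and> Y n \<omega> > l}" for n
  have Am[measurable]: "A n \<in> sets M" for n unfolding A_def by measurable
  define U where "U = (\<Union>n<N. A n)"
  have Um[measurable]: "U \<in> sets M" unfolding U_def by measurable
  have disj: "disjoint_family_on A {..<N}"
    unfolding disjoint_family_on_def
  proof (intro ballI impI)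
    fix m n :: nat assume "m \<noteq> n"
    then have "m < n \<or> n < m" by arith
    show "A m \<inter> A n = {}"
    proof (intro equalityI subsetI)
      fix \<omega> assume w: "\<omega> \<in> A m \<inter> A n"
      from \<open>m < n \<or> n < m\<close> show "\<omega> \<in> {}"
      proof
        assume "m < n" then have "Y m \<omega> \<le> a" "Y m \<omega> > l" using w by (auto simp: A_def)
        then show ?thesis using a by simp
      next
        assume "n < m" then have "Y n \<omega> \<le> a" "Y n \<omega> > l" using w by (auto simp: A_def)
        then show ?thesis using a by simp
      qed
    qed simp
  qed
  have "prob U = (\<Sum>n<N. prob (A n))" unfolding U_def
    by (rule finite_measure_finite_Union) (use disj in auto)
  also have "\<dots> = (\<Sum>n<N. (1 - p a)^n) * p l"
    by (simp add: A_def prob_An sum_distrib_right)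
  also have "\<dots> = (1 - (1 - p a)^N) / p a * p l"
    using p_pos[of a] by (subst sum_gp_strict) simp
  finally have PU: "prob U = (p l / p a) * (1 - (1 - p a)^N)" by simp
  define Z where "Z \<omega> = (\<Sum>i<N. g a (Y i \<omega>))" for \<omega>
  have Zm[measurable]: "Z \<in> borel_measurable M" unfolding Z_def[abs_def] by measurable
  have Zint: "integrable M Z" unfolding Z_def[abs_def] by (intro Bochner_Integration.integrable_sum int_g) simp
  have EZ: "expectation Z = N * F a" unfolding Z_def[abs_def]
    by (subst Bochner_Integration.integral_sum) (auto intro: int_g simp: F_Y)
  have Mk: "prob {\<omega>\<in>space M. Z \<omega> \<ge> c} \<le> N * F a / c"
  proof -
    have "AE x in M. 0 \<le> Z x" by (auto intro!: AE_I2 simp: Z_def g_nn sum_nonneg)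
    from integral_Markov_inequality_measure[OF Zint sets.top this c] EZ show ?thesis by simp
  qed
  have sub: "U - {\<omega>\<in>space M. Z \<omega> \<ge> c} \<subseteq> {\<omega>\<in>space M. sl Y l \<omega> < c}"
  proof
    fix \<omega> assume "\<omega> \<in> U - {\<omega>\<in>space M. Z \<omega> \<ge> c}"
    then obtain n where n: "n < N" "\<omega> \<in> A n" "Z \<omega> < c" "\<omega> \<in> space M"
      unfolding U_def by (auto simp: A_def)
    then have h: "\<forall>i<n. Y i \<omega> \<le> a" "Y n \<omega> > l" by (auto simp: A_def)
    have fe: "first_exc Y l \<omega> = n" by (rule first_exc_eq[OF h a(2)])
    have "sl Y l \<omega> = (\<Sum>i<n. Y i \<omega>)" by (simp add: sl_def fe)
    also have "\<dots> \<le> (\<Sum>i<n. g a (Y i \<omega>))"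
      using h(1) by (intro sum_mono) (auto simp: g_def)
    also have "\<dots> \<le> Z \<omega>" unfolding Z_def
      using n(1) by (intro sum_mono2) (auto simp: g_nn)
    finally show "\<omega> \<in> {\<omega>\<in>space M. sl Y l \<omega> < c}" using n by simp
  qed
  have "prob U \<le> prob (U - {\<omega>\<in>space M. Z \<omega> \<ge> c}) + prob {\<omega>\<in>space M. Z \<omega> \<ge> c}"
  proof -
    have "prob U \<le> prob ((U - {\<omega>\<in>space M. Z \<omega> \<ge> c}) \<union> {\<omega>\<in>space M. Z \<omega> \<ge> c})"
      by (intro finite_measure_mono) auto
    also have "\<dots> \<le> prob (U - {\<omega>\<in>space M. Z \<omega> \<ge> c}) + prob {\<omega>\<in>space M. Z \<omega> \<ge> c}"
      by (intro measure_Un_le) auto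
    finally show ?thesis .
  qed
  moreover have "prob (U - {\<omega>\<in>space M. Z \<omega> \<ge> c}) \<le> prob {\<omega>\<in>space M. sl Y l \<omega> < c}"
    using sub by (intro finite_measure_mono) auto
  ultimately show ?thesis using PU Mk by linarith
qed


lemma main_loc:
  fixes h :: "real \<Rightarrow> real"
  assumes hlim: "filterlim h at_top at_top"
    and ho: "(\<lambda>t. (h t)\<^sup>2) \<in> o[at_top](\<lambda>t. rr (tailL M \<sigma>0) t)"
    and hev: "eventually (\<lambda>t.
           tailL M \<sigma>0 (ell (tailL M \<sigma>0) t / (h t)^3)
             > tailL M \<sigma>0 (ell (tailL M \<sigma>0) t) * (1 - 1 / h t)
         \<and> tailL M \<sigma>0 (ell (tailL M \<sigma>0) t * (h t)^3)
             < tailL M \<sigma>0 (ell (tailL M \<sigma>0) t) * (1 + 1 / h t)) at_top"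
  shows "((\<lambda>t. measure M {\<omega> \<in> space M.
             sl Y (ell (tailL M \<sigma>0) t) \<omega>
               < t / (2 * rr (tailL M \<sigma>0) t * (h t)\<^sup>2)}) \<longlongrightarrow> 1) at_top"
proof -
  let ?L = "tailL M \<sigma>0"
  let ?S = "\<lambda>t. {\<omega> \<in> space M. sl Y (ell ?L t) \<omega> < t / (2 * rr ?L t * (h t)\<^sup>2)}"
  obtain x0 where x0: "x0 > 0" "\<And>x. x \<ge> x0 \<Longrightarrow> ?L (2*x) \<le> 11/10 * ?L x"
    using L_dbl by auto
  have pdbl: "p x \<le> 11/10 * p (2*x)" if "x \<ge> x0" for x
  proof -
    have "1 / p (2*x) \<le> 11/10 * (1 / p x)" using x0(2)[OF that] by (simp add: Lf_eq)
    then show ?thesis using p_pos[of x] p_pos[of "2*x"] by (simp add: field_simps)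
  qed
  define A where "A t = inverse (h t) + exp (- sqrt (h t)) + 80 * (inverse (sqrt (h t)) + inverse (h t))" for t
  define \<phi> where "\<phi> x = ?L x ^ 3 / x" for x
  define b where "b t = 1 - A t - 32 * x0 * \<phi> (ell ?L t)" for t
  have hs: "filterlim (\<lambda>t. sqrt (h t)) at_top at_top" by (rule filterlim_compose[OF sqrt_at_top hlim])
  have l1: "((\<lambda>t. inverse (h t)) \<longlongrightarrow> 0) at_top" by (rule tendsto_inverse_0_at_top[OF hlim])
  have l2: "((\<lambda>t. inverse (sqrt (h t))) \<longlongrightarrow> 0) at_top" by (rule tendsto_inverse_0_at_top[OF hs])
  have "filterlim (\<lambda>t. - sqrt (h t)) at_bot at_top" using hs by (simp add: filterlim_uminus_at_top)
  then have l3: "((\<lambda>t. exp (- sqrt (h t))) \<longlongrightarrow> 0) at_top" by (rule filterlim_compose[OF exp_at_bot])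
  have "(A \<longlongrightarrow> 0 + 0 + 80 * (0 + 0)) at_top" unfolding A_def
    by (intro tendsto_add tendsto_mult tendsto_const l1 l2 l3)
  then have Alim: "(A \<longlongrightarrow> 0) at_top" by simp
  have ellt: "filterlim (ell ?L) at_top at_top" by (rule ell_at_top) (use L_mono L_ge1 in auto)
  have philim: "((\<lambda>t. \<phi> (ell ?L t)) \<longlongrightarrow> 0) at_top" unfolding \<phi>_def
    using filterlim_compose[OF L_phi ellt] by simp
  have blim: "(b \<longlongrightarrow> 1) at_top" unfolding b_def
    using tendsto_diff[OF tendsto_diff[OF tendsto_const Alim] tendsto_mult[OF tendsto_const philim]]
    by simp
  have E1: "eventually (\<lambda>t. 2 \<le> h t) at_top" using hlim unfolding filterlim_at_top by blast
  have E2: "eventually (\<lambda>t. ?L (ell ?L t / (h t)^3) > ?L (ell ?L t) * (1 - 1 / h t)) at_top"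
    using hev by (rule eventually_mono) simp
  have E3: "eventually (\<lambda>t. norm ((h t)\<^sup>2) \<le> 1 * norm (rr ?L t)) at_top"
    using landau_o.smallD[OF ho, of 1] by simp
  have E4: "eventually (\<lambda>t. 1 \<le> ell ?L t) at_top" using ellt unfolding filterlim_at_top by blast
  have E5: "eventually (\<lambda>t. (0::real) \<le> t) at_top" using eventually_ge_at_top[of "0::real"] by simp
  have low: "eventually (\<lambda>t. b t \<le> measure M (?S t)) at_top"
    using E1 E2 E3 E4 E5
  proof eventually_elim
    case (elim t)
    define l where "l = ell ?L t"
    define hh where "hh = h t"
    define r where "r = ?L l"
    have hh2: "hh \<ge> 2" using elim by (simp add: hh_def)
    have hh0: "hh > 0" using hh2 by simp
    have l1: "l \<ge> 1" using elim by (simp add: l_def)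
    have r1: "r \<ge> 1" unfolding r_def by (rule L_ge1)
    have hr: "hh^2 \<le> r" using elim r1 by (simp add: hh_def r_def l_def rr_def)
    define a where "a = l / hh^3"
    have h3: "hh^3 \<ge> 2"
    proof -
      have "hh^3 \<ge> 2^3" using hh2 by (intro power_mono) auto
      then show ?thesis by simp
    qed
    have a0: "a > 0" using l1 hh0 by (simp add: a_def)
    have al2: "a \<le> l/2" unfolding a_def using l1 h3 hh0 by (intro divide_left_mono) auto
    have al: "a \<le> l" using al2 l1 by simp
    define La where "La = ?L a"
    have LaR: "La \<le> r" unfolding La_def r_def by (rule L_mono[OF al])
    have LaL: "La > r * (1 - 1/hh)" using elim by (simp add: La_def r_def a_def l_def hh_def)
    have "r * (1 - 1/hh) \<ge> r / 2"
    proof -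
      have "1 - 1/hh \<ge> 1/2" using hh2 by (simp add: field_simps)
      then show ?thesis using r1 mult_left_mono[of "1/2" "1 - 1/hh" r] by simp
    qed
    then have La2: "La \<ge> r/2" using LaL by linarith
    have La0: "La > 0" using La2 r1 by simp
    have "(l/2) * ?L (l/2) < t"
      by (rule ell_basic(2)[where L="?L"]) (use L_mono L_ge1 elim l1 in \<open>auto simp: l_def\<close>)
    moreover have "?L (l/2) \<ge> r/2" using L_mono[OF al2] La2 by (simp add: La_def)
    moreover have "l * r \<le> l * (2 * ?L (l/2))"
      using l1 \<open>?L (l/2) \<ge> r/2\<close> by (intro mult_left_mono) auto
    ultimately have tlr: "t > l * r / 4" by linarith
    define c where "c = l / (8 * hh^2)"
    have c0: "c > 0" using l1 hh0 by (simp add: c_def)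
    have cle: "c \<le> t / (2 * r * hh^2)"
    proof -
      have "c = (l * r / 4) / (2 * r * hh^2)" using r1 hh0 by (simp add: c_def field_simps)
      also have "\<dots> \<le> t / (2 * r * hh^2)" using tlr r1 hh0 by (intro divide_right_mono) auto
      finally show ?thesis .
    qed
    define N where "N = nat \<lceil>r * sqrt hh\<rceil>"
    have N1: "r * sqrt hh \<le> N" unfolding N_def by linarith
    have N2: "N \<le> r * sqrt hh + 1"
    proof -
      have nn: "0 \<le> r * sqrt hh" using r1 hh0 by simp
      then have "real N = of_int \<lceil>r * sqrt hh\<rceil>" unfolding N_def by simp
      also have "\<dots> \<le> r * sqrt hh + 1" by linarith
      finally show ?thesis .
    qed
    have pl: "p l = 1 / r" using Lf_eq[of l] p_pos[of l] by (simp add: r_def)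
    have pa: "p a = 1 / La" using Lf_eq[of a] p_pos[of a] by (simp add: La_def)
    have mb: "prob_space.prob M {\<omega>\<in>space M. sl Y l \<omega> < c} \<ge>
        (p l / p a) * (1 - (1 - p a)^N) - N * F a / c"
      by (rule main_bound[OF a0 al c0])
    have q: "p l / p a = La / r" using pl pa La0 r1 by simp
    have first: "(p l / p a) * (1 - (1 - p a)^N) \<ge> 1 - 1/hh - exp (- sqrt hh)"
      unfolding q
    proof (rule arith1)
      show "0 < p a" by (rule p_pos)
      show "p a \<le> 1" by (rule p_le1)
      have "r * (1 - 1/hh) / r = 1 - 1/hh" using r1 by simp
      then show "La / r \<ge> 1 - 1/hh" using LaL r1 by (metis divide_right_mono less_imp_le
            less_le_trans zero_less_one)
      show "La / r \<le> 1" using LaR r1 by simp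
      have "sqrt hh \<le> r * sqrt hh / La"
        using LaR La0 mult_right_mono[OF LaR, of "sqrt hh"] hh0 by (simp add: field_simps)
      also have "\<dots> \<le> N / La" using N1 La0 by (intro divide_right_mono) auto
      finally show "sqrt hh \<le> N * p a" by (simp add: pa)
    qed
    have Fa: "F a \<le> 2*x0 + 5*(l/hh^3)*(1/La)"
    proof -
      have "F a \<le> 2*x0 + 5 * a * p a" using F_bound[OF x0(1) pdbl] a0 by simp
      then have "F a \<le> 2*x0 + 5 * a * (1 / La)" by (simp only: pa)
      then show ?thesis by (simp add: a_def)
    qed
    have second: "N * F a / c \<le> 32*x0*r^3/l + 80*(sqrt hh+1)/hh"
      unfolding c_def by (rule arith2[OF hh2 hr r1 _ x0(1) La2 N2 Fa]) (use l1 in simp)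
    have sq: "sqrt hh / hh = inverse (sqrt hh)"
    proof -
      have s0: "sqrt hh > 0" using hh0 by simp
      have "sqrt hh / hh = sqrt hh / (sqrt hh * sqrt hh)" using hh0 by simp
      also have "\<dots> = inverse (sqrt hh)" using s0 by (simp add: field_simps)
      finally show ?thesis .
    qed
    have "80*(sqrt hh+1)/hh = 80 * (inverse (sqrt hh) + inverse hh)"
    proof -
      have "80*(sqrt hh+1)/hh = 80 * (sqrt hh / hh) + 80 * (1 / hh)" by (simp add: add_divide_distrib)
      then show ?thesis using sq by (simp add: divide_inverse)
    qed
    then have "b t = 1 - 1/hh - exp (- sqrt hh) - (32*x0*r^3/l + 80*(sqrt hh+1)/hh)"
      by (simp add: b_def A_def \<phi>_def hh_def r_def l_def divide_inverse)
    also have "\<dots> \<le> prob_space.prob M {\<omega>\<in>space M. sl Y l \<omega> < c}"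
      using mb first second by linarith
    also have "\<dots> \<le> measure M (?S t)"
    proof (rule finite_measure_mono)
      show "{\<omega>\<in>space M. sl Y l \<omega> < c} \<subseteq> ?S t"
        using cle by (auto simp: l_def rr_def r_def hh_def)
      show "?S t \<in> sets M" by measurable
    qed
    finally show ?case .
  qed
  have up: "eventually (\<lambda>t. measure M (?S t) \<le> 1) at_top"
    by (rule always_eventually) (simp add: prob_le_1)
  show ?thesis by (rule tendsto_sandwich[OF low up blim tendsto_const])
qed

end

theorem proposition3p6:
  fixes M :: "'a measure" and \<sigma>0 :: "'a \<Rightarrow> real" and Y :: "nat \<Rightarrow> 'a \<Rightarrow> real"
    and h :: "real \<Rightarrow> real"
  assumes "prob_space M"
    and "\<sigma>0 \<in> borel_measurable M"
    and "\<forall>\<omega>\<in>space M. \<sigma>0 \<omega> > 0"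
    and "slowly_varying (tailL M \<sigma>0)"
    and "\<And>i. Y i \<in> borel_measurable M"
    and "prob_space.indep_vars M (\<lambda>_. borel) Y UNIV"
    and "\<And>i. distr M borel (Y i) = distr M borel \<sigma>0"
    and "filterlim h at_top at_top"
    and "(\<lambda>t. (h t)\<^sup>2) \<in> o[at_top](\<lambda>t. rr (tailL M \<sigma>0) t)"
    and "eventually (\<lambda>t.
           tailL M \<sigma>0 (ell (tailL M \<sigma>0) t / (h t)^3)
             > tailL M \<sigma>0 (ell (tailL M \<sigma>0) t) * (1 - 1 / h t)
         \<and> tailL M \<sigma>0 (ell (tailL M \<sigma>0) t * (h t)^3)
             < tailL M \<sigma>0 (ell (tailL M \<sigma>0) t) * (1 + 1 / h t)) at_top"
  shows "((\<lambda>t. measure M {\<omega> \<in> space M.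
             sl Y (ell (tailL M \<sigma>0) t) \<omega>
               < t / (2 * rr (tailL M \<sigma>0) t * (h t)\<^sup>2)}) \<longlongrightarrow> 1) at_top"
proof -
  have "setting M \<sigma>0 Y" unfolding setting_def setting_axioms_def using assms by auto
  then show ?thesis by (rule setting.main_loc) (use assms in auto)
qed

end
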